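(* Let $p\ge2$ and let $x=x_{i_1}^{r_1}x_{i_2}^{r_2}\cdots x_{i_n}^{r_n}$ ($n\ge1$, $i_1<\dots<i_n$, $r_k\ge1$) be a positive word in normal form in $F(p)$. Then $$N_2(x)=\max\{\,i_k+(p-1)(r_k+r_{k+1}+\dots+r_n)+1 : k=1,\dots,n\,\}$$ equals the $y$-coordinate of the last breakpoint of the graph of $x$ regarded as a homeomorphism of $\mathbb{R}$, and, with $D(x)=r_1+\dots+r_n+i_n$, $$\frac{D(x)}{2}\le N_2(x)\le D(x)(p-1)+1.$$
   Context: For $p\ge2$, $F(p)$ is the group of piecewise-linear orientation-preserving homeomorphisms of $[0,1]$ with breakpoints in $\mathbb{Z}[1/p]$ and slopes integer powers of $p$, with presentation $\langle x_0,x_1,\dots\mid x_i^{-1}x_jx_i=x_{j+p-1}\ (i<j)\rangle$; products are compositions on the right ($xy$ means first $x$, then $y$). Every element has a unique normal form $x_{i_1}^{r_1}\cdots x_{i_n}^{r_n}x_{j_m}^{-s_m}\cdots x_{j_1}^{-s_1}$ ($i_1<\dots<i_n$, $j_1<\dots<j_m$, positive exponents, and if both $x_i$ and $x_i^{-1}$ occur then one of $x_{i+1}^{\pm1},\dots,x_{i+p-1}^{\pm1}$ occurs). Realization on $\mathbb{R}$: the assignment $x_i\mapsto f_i$, where $f_i(t)=t$ for $t\le i$, $f_i(t)=pt+i(1-p)$ for $i\le t\le i+1$, $f_i(t)=t+p-1$ for $t\ge i+1$, extends to an isomorphism of $F(p)$ onto a group of piecewise-linear homeomorphisms of $\mathbb{R}$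 (with composition on the right); the graph of $x$ refers to the graph of this homeomorphism of $\mathbb{R}$. *)

theory Defs
  imports Complex_Main
begin

definition gen_fun :: "nat \<Rightarrow> nat \<Rightarrow> real \<Rightarrow> real" where
  "gen_fun p i t =
     (if t \<le> real i then t
      else if t \<le> real i + 1 then real p * t + real i * (1 - real p)
      else t + real p - 1)"

text \<open>The homeomorphism of the positive word x_{i 1}^{r 1} ... x_{i m}^{r m}
  (indices 1..m); products compose on the right, so x_{i 1}^{r 1} acts first.\<close>
fun word_fun :: "nat \<Rightarrow> (nat \<Rightarrow> nat) \<Rightarrow> (nat \<Rightarrow> nat) \<Rightarrow> nat \<Rightarrow> real \<Rightarrow> real" where
  "word_fun p i r 0 = id"
| "word_fun p i r (Suc m) = (gen_fun p (i (Suc m)) ^^ r (Suc m)) \<circ> word_fun p i r m"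

definition breakpoint :: "(real \<Rightarrow> real) \<Rightarrow> real \<Rightarrow> bool" where
  "breakpoint g t \<longleftrightarrow>
     \<not> (\<exists>e>0. \<exists>a b. \<forall>s. \<bar>s - t\<bar> < e \<longrightarrow> g s = a * s + b)"

definition N2 :: "nat \<Rightarrow> (nat \<Rightarrow> nat) \<Rightarrow> (nat \<Rightarrow> nat) \<Rightarrow> nat \<Rightarrow> nat" where
  "N2 p i r n = Max ((\<lambda>k. i k + (p - 1) * (\<Sum>j=k..n. r j) + 1) ` {1..n})"

definition Dx :: "(nat \<Rightarrow> nat) \<Rightarrow> (nat \<Rightarrow> nat) \<Rightarrow> nat \<Rightarrow> nat" where
  "Dx i r n = (\<Sum>k=1..n. r k) + i n"

end

theory Submission
  imports Defs
begin

lemma gen_le: "p \<ge> 2 \<Longrightarrow> gen_fun p i v \<le> v + real p - 1"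
proof -
  assume p: "p \<ge> 2"
  have "real p * v + real i * (1 - real p) - (v + real p - 1) = (real p - 1) * (v - real i - 1)"
    by (simp add: algebra_simps)
  moreover have "v \<le> real i + 1 \<Longrightarrow> (real p - 1) * (v - real i - 1) \<le> 0"
    using p by (intro mult_nonneg_nonpos) auto
  ultimately show ?thesis using p unfolding gen_fun_def by (auto simp: algebra_simps)
qed

lemma gen_eq: "p \<ge> 2 \<Longrightarrow> gen_fun p i v = v + real p - 1 \<longleftrightarrow> v \<ge> real i + 1"
proof -
  assume p: "p \<ge> 2"
  have e: "real p * v + real i * (1 - real p) - (v + real p - 1) = (real p - 1) * (v - real i - 1)"
    by (simp add: algebra_simps)
  have n: "v < real i + 1 \<Longrightarrow> (real p - 1) * (v - real i - 1) < 0"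
    using p by (intro mult_pos_neg) auto
  show ?thesis
  proof (cases "v \<le> real i")
    case True then show ?thesis using p unfolding gen_fun_def by auto
  next
    case F: False
    show ?thesis
    proof (cases "v \<le> real i + 1")
      case True
      then show ?thesis using F e n unfolding gen_fun_def by (cases "v < real i + 1") auto
    next
      case False then show ?thesis using F unfolding gen_fun_def by auto
    qed
  qed
qed

lemma pow_le: "p \<ge> 2 \<Longrightarrow> (gen_fun p i ^^ j) v \<le> v + real j * (real p - 1)"
proof (induction j)
  case 0 then show ?case by simp
next
  case (Suc j)
  have "(gen_fun p i ^^ Suc j) v = gen_fun p i ((gen_fun p i ^^ j) v)" by simp
  also have "\<dots> \<le> (gen_fun p i ^^ j) v + real p - 1" using gen_le Suc by blast
  finally show ?case using Suc by (simp add: algebra_simps)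
qed

lemma pow_eq: "p \<ge> 2 \<Longrightarrow> j \<ge> 1 \<Longrightarrow>
   (gen_fun p i ^^ j) v = v + real j * (real p - 1) \<longleftrightarrow> v \<ge> real i + 1"
proof (induction j)
  case 0 then show ?case by simp
next
  case (Suc j)
  have A: "(gen_fun p i ^^ Suc j) v = gen_fun p i ((gen_fun p i ^^ j) v)" by simp
  have B: "gen_fun p i ((gen_fun p i ^^ j) v) \<le> (gen_fun p i ^^ j) v + real p - 1"
    using gen_le Suc by blast
  have C: "(gen_fun p i ^^ j) v \<le> v + real j * (real p - 1)" using pow_le Suc by blast
  have iff: "(gen_fun p i ^^ Suc j) v = v + real (Suc j) * (real p - 1) \<longleftrightarrow>
     (gen_fun p i ^^ j) v = v + real j * (real p - 1) \<and> (gen_fun p i ^^ j) v \<ge> real i + 1"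
  proof
    assume h: "(gen_fun p i ^^ Suc j) v = v + real (Suc j) * (real p - 1)"
    then have h1: "(gen_fun p i ^^ j) v = v + real j * (real p - 1)" using A B C
      by (simp add: algebra_simps)
    have sj: "real (Suc j) * (real p - 1) = real j * (real p - 1) + (real p - 1)"
      by (simp add: algebra_simps)
    have "gen_fun p i ((gen_fun p i ^^ j) v) = (gen_fun p i ^^ j) v + real p - 1"
      using h A h1 sj by linarith
    then show "(gen_fun p i ^^ j) v = v + real j * (real p - 1) \<and> (gen_fun p i ^^ j) v \<ge> real i + 1"
      using h1 gen_eq Suc by blast
  next
    assume h: "(gen_fun p i ^^ j) v = v + real j * (real p - 1) \<and> (gen_fun p i ^^ j) v \<ge> real i + 1"
    then have "gen_fun p i ((gen_fun p i ^^ j) v) = (gen_fun p i ^^ j) v + real p - 1"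
      using gen_eq Suc by blast
    moreover have sj: "real (Suc j) * (real p - 1) = real j * (real p - 1) + (real p - 1)"
      by (simp add: algebra_simps)
    ultimately show "(gen_fun p i ^^ Suc j) v = v + real (Suc j) * (real p - 1)"
      using h A by linarith
  qed
  show ?case
  proof (cases "j = 0")
    case True then show ?thesis using iff by simp
  next
    case False
    then have IH: "(gen_fun p i ^^ j) v = v + real j * (real p - 1) \<longleftrightarrow> v \<ge> real i + 1"
      using Suc by simp
    have "real i + 1 \<le> v \<Longrightarrow> real i + 1 \<le> v + real j * (real p - 1)"
      using Suc.prems by (simp add: add_increasing2)
    then show ?thesis using iff IH by auto
  qed
qed

definition CC :: "nat \<Rightarrow> (nat \<Rightarrow> nat) \<Rightarrow> nat \<Rightarrow> real" where
  "CC p r m = (\<Sum>k=1..m. real (r k)) * (real p - 1)"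

lemma CC_Suc: "CC p r (Suc m) = CC p r m + real (r (Suc m)) * (real p - 1)"
  unfolding CC_def by (simp add: algebra_simps)

lemma word_le: "p \<ge> 2 \<Longrightarrow> word_fun p i r m s \<le> s + CC p r m"
proof (induction m)
  case 0 then show ?case by (simp add: CC_def)
next
  case (Suc m)
  have "word_fun p i r (Suc m) s = (gen_fun p (i (Suc m)) ^^ r (Suc m)) (word_fun p i r m s)" by simp
  also have "\<dots> \<le> word_fun p i r m s + real (r (Suc m)) * (real p - 1)" using pow_le Suc by blast
  finally show ?case using Suc CC_Suc[of p r m] by linarith
qed

lemma N2_Suc:
  assumes "m \<ge> 1"
  shows "N2 p i r (Suc m) = max (i (Suc m) + (p - 1) * r (Suc m) + 1) (N2 p i r m + (p - 1) * r (Suc m))"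
proof -
  let ?f = "\<lambda>k. i k + (p - 1) * (\<Sum>j=k..m. r j) + 1"
  let ?g = "\<lambda>k. i k + (p - 1) * (\<Sum>j=k..Suc m. r j) + 1"
  have s: "{1..Suc m} = insert (Suc m) {1..m}" by auto
  have im: "?g ` {1..m} = (\<lambda>y. y + (p - 1) * r (Suc m)) ` (?f ` {1..m})"
    by (force simp: image_image algebra_simps)
  have mono: "mono (\<lambda>y::nat. y + (p - 1) * r (Suc m))" by (auto simp: mono_def)
  have "Max (?g ` {1..m}) = Max (?f ` {1..m}) + (p - 1) * r (Suc m)"
    unfolding im using mono_Max_commute[OF mono, of "?f ` {1..m}"] assms by simp
  then show ?thesis unfolding N2_def s using assms by (simp add: Max_insert)
qed

lemma word_eq:
  assumes p: "p \<ge> 2" and m: "m \<ge> 1" and r: "\<And>k. 1 \<le> k \<Longrightarrow> k \<le> m \<Longrightarrow> r k \<ge> 1"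
  shows "word_fun p i r m s = s + CC p r m \<longleftrightarrow> s + CC p r m \<ge> real (N2 p i r m)"
  using m r
proof (induction m rule: nat_induct_at_least)
  case base
  have "N2 p i r 1 = i 1 + (p - 1) * r 1 + 1" unfolding N2_def by simp
  then have N: "real (N2 p i r 1) = real (i 1) + (real p - 1) * real (r 1) + 1" using p
    by (simp add: of_nat_diff)
  have "r 1 \<ge> 1" using base by simp
  then show ?case using pow_eq[OF p, where j="r 1" and i="i 1" and v=s] N by (simp add: CC_def algebra_simps)
next
  case (Suc m)
  let ?w = "word_fun p i r m s"
  have IH: "?w = s + CC p r m \<longleftrightarrow> s + CC p r m \<ge> real (N2 p i r m)" using Suc by simp
  have le: "?w \<le> s + CC p r m" using word_le p by blast
  have rs: "r (Suc m) \<ge> 1" using Suc by simp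
  have A: "word_fun p i r (Suc m) s = (gen_fun p (i (Suc m)) ^^ r (Suc m)) ?w" by simp
  have B: "(gen_fun p (i (Suc m)) ^^ r (Suc m)) ?w \<le> ?w + real (r (Suc m)) * (real p - 1)"
    using pow_le p by blast
  have E: "(gen_fun p (i (Suc m)) ^^ r (Suc m)) ?w = ?w + real (r (Suc m)) * (real p - 1)
      \<longleftrightarrow> ?w \<ge> real (i (Suc m)) + 1" using pow_eq[OF p rs] by blast
  have iff: "word_fun p i r (Suc m) s = s + CC p r (Suc m) \<longleftrightarrow>
      ?w = s + CC p r m \<and> ?w \<ge> real (i (Suc m)) + 1"
    using A B E le CC_Suc[of p r m] by (smt (verit))
  have N: "real (N2 p i r (Suc m)) = max (real (i (Suc m)) + (real p - 1) * real (r (Suc m)) + 1)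
      (real (N2 p i r m) + (real p - 1) * real (r (Suc m)))"
  proof -
    have pp: "real (p - 1) = real p - 1" using p by (simp add: of_nat_diff)
    show ?thesis unfolding N2_Suc[of m p i r, OF Suc.hyps(1)] of_nat_max of_nat_add of_nat_mult pp
      by simp
  qed
  show ?case unfolding iff IH N using CC_Suc[of p r m] IH by (auto simp: algebra_simps)
qed

lemma i_mono:
  assumes "\<And>k. 1 \<le> k \<Longrightarrow> k < n \<Longrightarrow> i k < i (Suc k)" and "1 \<le> k" and "k \<le> n"
  shows "i k \<le> (i n :: nat)"
  using assms(3)
proof (induction n rule: dec_induct)
  case base then show ?case by simp
next
  case (step m)
  then show ?case using assms(1)[of m] assms(2) by simp
qed

theorem proposition5:
  fixes p n :: nat and i r :: "nat \<Rightarrow> nat"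
  assumes "p \<ge> 2" and "n \<ge> 1"
    and "\<And>k. 1 \<le> k \<Longrightarrow> k < n \<Longrightarrow> i k < i (Suc k)"
    and "\<And>k. 1 \<le> k \<Longrightarrow> k \<le> n \<Longrightarrow> r k \<ge> 1"
  shows "(\<exists>t. breakpoint (word_fun p i r n) t
              \<and> (\<forall>s. breakpoint (word_fun p i r n) s \<longrightarrow> s \<le> t)
              \<and> word_fun p i r n t = real (N2 p i r n))
         \<and> real (Dx i r n) / 2 \<le> real (N2 p i r n)
         \<and> N2 p i r n \<le> Dx i r n * (p - 1) + 1"
proof -
  let ?g = "word_fun p i r n"
  let ?C = "CC p r n"
  define t where "t = real (N2 p i r n) - ?C"
  have le: "\<And>s. ?g s \<le> s + ?C" using word_le assms(1) by blast
  have eq: "\<And>s. ?g s = s + ?C \<longleftrightarrow> s \<ge> t"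
  proof -
    fix s
    have "?g s = s + ?C \<longleftrightarrow> s + ?C \<ge> real (N2 p i r n)"
      using word_eq[OF assms(1) assms(2), of r i s] assms(4) by blast
    then show "?g s = s + ?C \<longleftrightarrow> s \<ge> t" unfolding t_def by linarith
  qed
  have lt: "\<And>s. s < t \<Longrightarrow> ?g s < s + ?C" using le eq by (meson le_less not_less)
  have bp: "breakpoint ?g t"
    unfolding breakpoint_def
  proof
    assume "\<exists>e>0. \<exists>a b. \<forall>s. \<bar>s - t\<bar> < e \<longrightarrow> ?g s = a * s + b"
    then obtain e a b where e: "e > 0" and ab: "\<And>s. \<bar>s - t\<bar> < e \<Longrightarrow> ?g s = a * s + b" by blast
    have 1: "a * t + b = t + ?C" using ab[of t] e eq[of t] by simp
    have 2: "a * (t + e/2) + b = t + e/2 + ?C" using ab[of "t + e/2"] e eq[of "t + e/2"] by simp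
    have d: "a * (t + e/2) = a * t + a * (e/2)" by (simp add: distrib_left)
    have "a * (e/2) = e/2" using 1 2 d by linarith
    then have a1: "a = 1" using e by simp
    have "?g (t - e/2) = a * (t - e/2) + b" using ab[of "t - e/2"] e by simp
    also have "\<dots> = t - e/2 + ?C" using 1 a1 by simp
    finally show False using lt[of "t - e/2"] e by simp
  qed
  have last: "\<forall>s. breakpoint ?g s \<longrightarrow> s \<le> t"
  proof (intro allI impI)
    fix s assume b: "breakpoint ?g s"
    show "s \<le> t"
    proof (rule ccontr)
      assume "\<not> s \<le> t"
      have "\<forall>u. \<bar>u - s\<bar> < s - t \<longrightarrow> ?g u = 1 * u + ?C"
      proof (intro allI impI)
        fix u assume "\<bar>u - s\<bar> < s - t"
        then have "u \<ge> t" by linarith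
        then show "?g u = 1 * u + ?C" using eq by simp
      qed
      moreover have "s - t > 0" using \<open>\<not> s \<le> t\<close> by simp
      ultimately have "\<exists>e>0. \<exists>a b. \<forall>u. \<bar>u - s\<bar> < e \<longrightarrow> ?g u = a * u + b" by blast
      then show False using b unfolding breakpoint_def by blast
    qed
  qed
  have gt: "?g t = real (N2 p i r n)" using eq[of t] unfolding t_def by simp
  let ?f = "\<lambda>k. i k + (p - 1) * (\<Sum>j=k..n. r j) + 1"
  let ?S = "\<Sum>k=1..n. r k"
  have fin: "finite (?f ` {1..n})" by simp
  have ge1: "?f 1 \<le> N2 p i r n" unfolding N2_def using assms(2) by (intro Max_ge) auto
  have mem: "?f n \<in> ?f ` {1..n}" by (rule imageI) (use assms(2) in simp)
  have gen0: "?f n \<le> N2 p i r n" unfolding N2_def by (rule Max_ge[OF fin mem])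
  have gen: "i n + (p - 1) * r n + 1 \<le> N2 p i r n" using gen0 by simp
  have p1: "1 \<le> p - 1" using assms(1) by simp
  have "?S \<le> (p - 1) * ?S" using mult_le_mono1[OF p1, of ?S] by simp
  then have "?S + i n \<le> 2 * N2 p i r n" using ge1 gen by linarith
  then have "real (?S + i n) \<le> 2 * real (N2 p i r n)" by (metis of_nat_le_iff of_nat_mult of_nat_numeral)
  then have lower: "real (Dx i r n) / 2 \<le> real (N2 p i r n)" unfolding Dx_def by (simp add: field_simps)
  have "\<And>k. k \<in> {1..n} \<Longrightarrow> ?f k \<le> Dx i r n * (p - 1) + 1"
  proof -
    fix k assume k: "k \<in> {1..n}"
    have ik: "i k \<le> i n" using i_mono[of n i k] assms(3) k by auto
    have "(\<Sum>j=k..n. r j) \<le> ?S" using k by (intro sum_mono2) auto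
    then have "(p - 1) * (\<Sum>j=k..n. r j) \<le> (p - 1) * ?S" by simp
    moreover have "i n \<le> i n * (p - 1)" using mult_le_mono2[OF p1, of "i n"] by simp
    ultimately show "?f k \<le> Dx i r n * (p - 1) + 1" using ik unfolding Dx_def
      by (simp add: algebra_simps)
  qed
  then have upper: "N2 p i r n \<le> Dx i r n * (p - 1) + 1" unfolding N2_def
    using assms(2) by (intro Max.boundedI) auto
  show ?thesis using bp last gt lower upper by blast
qed

end
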